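(* Let $n\in\mathbb{N}$. Then: (i) $\|x\|_n=\sup\{\langle x\xi,\xi\rangle\colon \xi\in s',\ |\xi|_n'\leqslant 1\}$ for every positive $x\in\mathcal{S}$; (ii) $\|x\|_n^2\leqslant\|x^2\|_{2n}$ for every self-adjoint $x\in\mathcal{S}$; (iii) $\|x\|_n^2\leqslant\|x^*x\|_{2n}^{1/2}\,\|xx^*\|_{2n}^{1/2}$ for every $x\in\mathcal{S}$. Moreover, inequalities (ii) and (iii) are sharp, i.e. there exist nonzero (self-adjoint) $x\in\mathcal{S}$ for which equality holds in (ii) and in (iii).
   Context: Let $\mathbb{N}=\{1,2,\dots\}$. Let $s$ be the space of complex sequences $\xi=(\xi_j)_{j\geqslant1}$ with $|\xi|_n:=(\sum_{j}|\xi_j|^2j^{2n})^{1/2}<\infty$ for all $n\in\mathbb{N}$ (a Fréchet space with these norms), and let $s'$ be its dual, the space of sequences $\eta$ with $|\eta|_n':=(\sum_j|\eta_j|^2j^{-2n})^{1/2}<\infty$ for some $n$, with pairing $\langle\xi,\eta\rangle=\sum_j\xi_j\overline{\eta_j}$. The noncommutative Schwartz space $\mathcal{S}=L(s',s)$ is the space of continuous linear operators $s'\to s$ with the topology of uniform convergence on bounded sets; it is a $*$-algebra with product $xy:=x\circ\iota\circ y$ ($\iota\colon s\hookrightarrow s'$ the inclusion) and involution given by $\langle x^*\xi,\eta\rangle=\langle\xi,x\eta\rangle$. Via $s\subset\ell_2\subset s'$ each $x\in\mathcal{S}$ is a bounded operator on $\ell_2$, compatibly with products and adjoints. An element $x\in\mathcal{S}$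 is positive if $x=y^*y$ for some $y\in\mathcal{S}$ (equivalently $\langle x\xi,\xi\rangle\geqslant0$ for all $\xi\in s'$). For $n\in\mathbb{N}$ and $x\in\mathcal{S}$, $\|x\|_n:=\sup\{|x\xi|_n\colon \xi\in s',\ |\xi|_n'\leqslant1\}$; equivalently $\|x\|_n=\|d_nxd_n\|_{\mathcal{B}(\ell_2)}$ where $d_n=\operatorname{diag}(1^n,2^n,3^n,\dots)$. *)

theory Defs
  imports Complex_Main
begin

text \<open>Sequences xi = (xi_j)_{j>=1} are represented as functions nat => complex,
  where the component with index k :: nat stands for xi_{k+1}; hence the
  weight j is written real (Suc k).\<close>

type_synonym cseq = "nat \<Rightarrow> complex"


definition s_fin :: "nat \<Rightarrow> cseq \<Rightarrow> bool" where
  "s_fin n \<xi> \<longleftrightarrow> summable (\<lambda>k. (cmod (\<xi> k))\<^sup>2 * real (Suc k) ^ (2 * n))"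

definition sd_fin :: "nat \<Rightarrow> cseq \<Rightarrow> bool" where
  "sd_fin n \<xi> \<longleftrightarrow> summable (\<lambda>k. (cmod (\<xi> k))\<^sup>2 / real (Suc k) ^ (2 * n))"

definition s_norm :: "nat \<Rightarrow> cseq \<Rightarrow> real" where
  "s_norm n \<xi> = sqrt (\<Sum>k. (cmod (\<xi> k))\<^sup>2 * real (Suc k) ^ (2 * n))"

definition sd_norm :: "nat \<Rightarrow> cseq \<Rightarrow> real" where
  "sd_norm n \<xi> = sqrt (\<Sum>k. (cmod (\<xi> k))\<^sup>2 / real (Suc k) ^ (2 * n))"

definition s_space :: "cseq set" where
  "s_space = {\<xi>. \<forall>n\<ge>1. s_fin n \<xi>}"

definition sd_space :: "cseq set" where
  "sd_space = {\<xi>. \<exists>n\<ge>1. sd_fin n \<xi>}"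

definition pair :: "cseq \<Rightarrow> cseq \<Rightarrow> complex" where
  "pair \<xi> \<eta> = (\<Sum>k. \<xi> k * cnj (\<eta> k))"

text \<open>The noncommutative Schwartz space S = L(s', s): linear maps s' -> s that are
  continuous, s' carrying its (strong dual = inductive limit) topology, i.e. for
  every step k of the inductive limit and every norm m of s there is a bound.
  Only the values on s' are relevant.\<close>
definition SS :: "(cseq \<Rightarrow> cseq) set" where
  "SS = {x. (\<forall>\<xi>\<in>sd_space. x \<xi> \<in> s_space)
          \<and> (\<forall>\<xi>\<in>sd_space. \<forall>\<eta>\<in>sd_space. \<forall>a b.
                x (\<lambda>k. a * \<xi> k + b * \<eta> k) = (\<lambda>k. a * x \<xi> k + b * x \<eta> k))
          \<and> (\<forall>k m. \<exists>C. \<forall>\<xi>. sd_fin k \<xi> \<longrightarrow> s_norm m (x \<xi>) \<le> C * sd_norm k \<xi>)}"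

definition is_adjoint :: "(cseq \<Rightarrow> cseq) \<Rightarrow> (cseq \<Rightarrow> cseq) \<Rightarrow> bool" where
  "is_adjoint y x \<longleftrightarrow> y \<in> SS \<and>
     (\<forall>\<xi>\<in>sd_space. \<forall>\<eta>\<in>sd_space. pair (y \<xi>) \<eta> = pair \<xi> (x \<eta>))"

definition self_adjoint :: "(cseq \<Rightarrow> cseq) \<Rightarrow> bool" where
  "self_adjoint x \<longleftrightarrow> x \<in> SS \<and> is_adjoint x x"

text \<open>Product xy = x o iota o y (as maps on s').\<close>
definition smult :: "(cseq \<Rightarrow> cseq) \<Rightarrow> (cseq \<Rightarrow> cseq) \<Rightarrow> (cseq \<Rightarrow> cseq)" where
  "smult x y = (\<lambda>\<xi>. x (y \<xi>))"

definition positive :: "(cseq \<Rightarrow> cseq) \<Rightarrow> bool" where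
  "positive x \<longleftrightarrow> x \<in> SS \<and>
     (\<exists>y\<in>SS. \<exists>z. is_adjoint z y \<and> (\<forall>\<xi>\<in>sd_space. x \<xi> = smult z y \<xi>))"

definition op_norm :: "nat \<Rightarrow> (cseq \<Rightarrow> cseq) \<Rightarrow> real" where
  "op_norm n x = Sup {s_norm n (x \<xi>) | \<xi>. \<xi> \<in> sd_space \<and> sd_fin n \<xi> \<and> sd_norm n \<xi> \<le> 1}"

definition nonzero_op :: "(cseq \<Rightarrow> cseq) \<Rightarrow> bool" where
  "nonzero_op x \<longleftrightarrow> (\<exists>\<xi>\<in>sd_space. x \<xi> \<noteq> (\<lambda>k. 0))"

end

theory Submission
  imports Defs
begin

declare of_nat_Suc [simp del]

lemma real_amgm_bound:
  fixes X A B :: real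
  assumes A: "A \<ge> 0" and B: "B \<ge> 0" and h: "\<And>t. t > 0 \<Longrightarrow> 2 * X \<le> t * A + B / t"
  shows "X \<le> sqrt A * sqrt B"
proof (cases "A > 0 \<and> B > 0")
  case True
  define t where "t = sqrt B / sqrt A"
  have sA: "sqrt A > 0" and sB: "sqrt B > 0" using True by auto
  have tp: "t > 0" using sA sB by (simp add: t_def)
  have "t * A = sqrt B / sqrt A * (sqrt A * sqrt A)" unfolding t_def using A by simp
  also have "\<dots> = sqrt A * sqrt B" using sA by (simp add: divide_simps)
  finally have 1: "t * A = sqrt A * sqrt B" .
  have "B / t = (sqrt B * sqrt B) / (sqrt B / sqrt A)" unfolding t_def using B by simp
  also have "\<dots> = sqrt A * sqrt B" using sA sB by (simp add: divide_simps)
  finally have 2: "B / t = sqrt A * sqrt B" .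
  show ?thesis using h[OF tp] 1 2 by simp
next
  case False
  then have "A = 0 \<or> B = 0" using A B by auto
  show ?thesis
  proof (rule ccontr)
    assume "\<not> ?thesis"
    then have X: "X > 0" using \<open>A = 0 \<or> B = 0\<close> by auto
    show False
    proof (cases "A = 0")
      case True
      define t where "t = (B + 1) / X"
      have tp: "t > 0" using X B by (simp add: t_def)
      have "2 * X \<le> B / t" using h[OF tp] True by simp
      also have "B / t = B * X / (B + 1)" using X B by (simp add: t_def)
      also have "\<dots> < X" using X B by (simp add: field_simps)
      finally show False using X by simp
    next
      case False
      with \<open>A = 0 \<or> B = 0\<close> have B0: "B = 0" by simp
      define t where "t = X / (A + 1)"
      have tp: "t > 0" using X A by (simp add: t_def)
      have "2 * X \<le> t * A" using h[OF tp] B0 by simp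
      also have "t * A = X * A / (A + 1)" by (simp add: t_def)
      also have "\<dots> < X" using X A by (simp add: field_simps)
      finally show False using X by simp
    qed
  qed
qed

lemma cs_core:
  fixes f :: "nat \<Rightarrow> complex" and a b :: "nat \<Rightarrow> real"
  assumes fb: "\<And>k. cmod (f k) \<le> a k * b k" and a0: "\<And>k. a k \<ge> 0" and b0: "\<And>k. b k \<ge> 0"
    and sa: "summable (\<lambda>k. (a k)\<^sup>2)" and sb: "summable (\<lambda>k. (b k)\<^sup>2)"
  shows "summable f" and "cmod (suminf f) \<le> sqrt (\<Sum>k. (a k)\<^sup>2) * sqrt (\<Sum>k. (b k)\<^sup>2)"
proof -
  have amgm: "a k * b k \<le> (t * (a k)\<^sup>2 + (b k)\<^sup>2 / t) / 2" if "t > 0" for t k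
  proof -
    have "0 \<le> (t * a k - b k)\<^sup>2" by simp
    then have "2 * t * (a k * b k) \<le> t * t * (a k)\<^sup>2 + (b k)\<^sup>2"
      using that by (simp add: power2_eq_square algebra_simps)
    then show ?thesis using that by (simp add: field_simps power2_eq_square)
  qed
  have sab: "summable (\<lambda>k. (t * (a k)\<^sup>2 + (b k)\<^sup>2 / t) / 2)" for t
    using sa sb by (intro summable_divide summable_add summable_mult summable_divide)
  have sn: "summable (\<lambda>k. cmod (f k))"
  proof (rule summable_comparison_test'[where N=0, OF sab[of 1]])
    fix k :: nat
    have "cmod (f k) \<le> a k * b k" by (rule fb)
    also have "\<dots> \<le> (1 * (a k)\<^sup>2 + (b k)\<^sup>2 / 1) / 2" by (rule amgm) simp
    finally show "norm (cmod (f k)) \<le> (1 * (a k)\<^sup>2 + (b k)\<^sup>2 / 1) / 2" by simp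
  qed
  then show "summable f" by (rule summable_norm_cancel)
  show "cmod (suminf f) \<le> sqrt (\<Sum>k. (a k)\<^sup>2) * sqrt (\<Sum>k. (b k)\<^sup>2)"
  proof (rule real_amgm_bound)
    show "0 \<le> (\<Sum>k. (a k)\<^sup>2)" "0 \<le> (\<Sum>k. (b k)\<^sup>2)" using sa sb by (auto intro: suminf_nonneg)
    fix t :: real assume t: "t > 0"
    have "cmod (suminf f) \<le> (\<Sum>k. cmod (f k))" by (rule summable_norm[OF sn])
    also have "\<dots> \<le> (\<Sum>k. (t * (a k)\<^sup>2 + (b k)\<^sup>2 / t) / 2)"
      by (rule suminf_le[OF _ sn sab]) (use fb amgm[OF t] order_trans in blast)
    also have "\<dots> = (t * (\<Sum>k. (a k)\<^sup>2) + (\<Sum>k. (b k)\<^sup>2) / t) / 2"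
    proof -
      have s1: "summable (\<lambda>k. t * (a k)\<^sup>2)" using sa by (rule summable_mult)
      have s2: "summable (\<lambda>k. (b k)\<^sup>2 / t)" using sb by (rule summable_divide)
      have "(\<Sum>k. (t * (a k)\<^sup>2 + (b k)\<^sup>2 / t) / 2) = (\<Sum>k. (t * (a k)\<^sup>2 + (b k)\<^sup>2 / t)) / 2"
        by (rule suminf_divide) (intro summable_add s1 s2)
      also have "(\<Sum>k. (t * (a k)\<^sup>2 + (b k)\<^sup>2 / t)) = (\<Sum>k. t * (a k)\<^sup>2) + (\<Sum>k. (b k)\<^sup>2 / t)"
        by (rule suminf_add[OF s1 s2, symmetric])
      also have "(\<Sum>k. t * (a k)\<^sup>2) = t * (\<Sum>k. (a k)\<^sup>2)" by (rule suminf_mult[OF sa])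
      also have "(\<Sum>k. (b k)\<^sup>2 / t) = (\<Sum>k. (b k)\<^sup>2) / t" by (rule suminf_divide[OF sb])
      finally show ?thesis .
    qed
    finally show "2 * cmod (suminf f) \<le> t * (\<Sum>k. (a k)\<^sup>2) + (\<Sum>k. (b k)\<^sup>2) / t" by simp
  qed
qed

lemma summable_le_real:
  fixes f g :: "nat \<Rightarrow> real"
  assumes "summable g" "\<And>k. 0 \<le> f k" "\<And>k. f k \<le> g k"
  shows "summable f"
  by (rule summable_comparison_test'[OF assms(1), of 0]) (use assms in auto)

lemma w_ge1: "1 \<le> real (Suc k)" by simp
lemma w_pos: "0 < real (Suc k)" by simp

lemma wpow_mono: "m' \<le> m \<Longrightarrow> real (Suc k) ^ m' \<le> real (Suc k) ^ m"
  by (rule power_increasing) auto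

lemma sfin_mono: assumes "s_fin m a" "m' \<le> m" shows "s_fin m' a"
  using assms unfolding s_fin_def
  by (elim summable_le_real) (auto intro!: mult_left_mono wpow_mono)

lemma sdfin_mono: assumes "sd_fin m a" "m \<le> m'" shows "sd_fin m' a"
  using assms unfolding sd_fin_def
  by (elim summable_le_real) (auto intro!: divide_left_mono wpow_mono mult_pos_pos)

lemma sfin0_sdfin0: "sd_fin 0 a = s_fin 0 a" by (simp add: sd_fin_def s_fin_def)
lemma snorm0_sdnorm0: "sd_norm 0 a = s_norm 0 a" by (simp add: sd_norm_def s_norm_def)

lemma sfin_sdfin: assumes "s_fin m a" shows "sd_fin m' a"
proof -
  have "s_fin 0 a" using sfin_mono[OF assms] by simp
  then have "sd_fin 0 a" by (simp add: sfin0_sdfin0)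
  then show ?thesis by (rule sdfin_mono) simp
qed

lemma s_space_fin: assumes "a \<in> s_space" shows "s_fin m a"
proof (cases "m = 0")
  case True
  have "s_fin 1 a" using assms unfolding s_space_def by simp
  then show ?thesis by (rule sfin_mono) (simp add: True)
next
  case False
  then show ?thesis using assms unfolding s_space_def by simp
qed

lemma s_space_sd: assumes "a \<in> s_space" shows "a \<in> sd_space"
proof -
  have "sd_fin 1 a" by (rule sfin_sdfin[OF s_space_fin[OF assms]])
  then show ?thesis unfolding sd_space_def by blast
qed

lemma sdfin_space: assumes "sd_fin m a" shows "a \<in> sd_space"
proof (cases "m = 0")
  case True
  have "sd_fin 1 a" by (rule sdfin_mono[OF assms]) (simp add: True)
  then show ?thesis unfolding sd_space_def by blast
next
  case False
  then have "m \<ge> 1" by simp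
  with assms show ?thesis unfolding sd_space_def by blast
qed

lemma sd_space_fin: "a \<in> sd_space \<Longrightarrow> \<exists>p. sd_fin p a"
  unfolding sd_space_def by auto

lemma snorm_nonneg: "s_fin m a \<Longrightarrow> 0 \<le> s_norm m a"
  unfolding s_norm_def s_fin_def by (intro real_sqrt_ge_zero suminf_nonneg) auto
lemma sdnorm_nonneg: "sd_fin m a \<Longrightarrow> 0 \<le> sd_norm m a"
  unfolding sd_norm_def sd_fin_def by (intro real_sqrt_ge_zero suminf_nonneg) auto

lemma snorm_sq: assumes "s_fin m a" shows "(s_norm m a)\<^sup>2 = (\<Sum>k. (cmod (a k))\<^sup>2 * real (Suc k) ^ (2 * m))"
  using assms unfolding s_norm_def s_fin_def by (intro real_sqrt_pow2 suminf_nonneg) auto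

lemma sdnorm_sq: assumes "sd_fin m a" shows "(sd_norm m a)\<^sup>2 = (\<Sum>k. (cmod (a k))\<^sup>2 / real (Suc k) ^ (2 * m))"
  using assms unfolding sd_norm_def sd_fin_def by (intro real_sqrt_pow2 suminf_nonneg) auto

lemma snorm_mono: assumes "s_fin m a" "m' \<le> m" shows "s_norm m' a \<le> s_norm m a"
  unfolding s_norm_def
  by (rule real_sqrt_le_mono, rule suminf_le)
     (use assms sfin_mono[OF assms] in \<open>auto simp: s_fin_def intro!: mult_left_mono wpow_mono\<close>)

lemma sdnorm_zero: assumes "sd_fin m a" "sd_norm m a = 0" shows "a = (\<lambda>k. 0)"
proof -
  have "(\<Sum>k. (cmod (a k))\<^sup>2 / real (Suc k) ^ (2 * m)) = 0"
    using assms unfolding sd_norm_def by simp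
  then have "\<forall>k. (cmod (a k))\<^sup>2 / real (Suc k) ^ (2 * m) = 0"
    using assms(1) unfolding sd_fin_def by (subst (asm) suminf_eq_zero_iff) auto
  then show ?thesis by auto
qed

lemma snorm_zero: assumes "s_fin m a" "s_norm m a = 0" shows "a = (\<lambda>k. 0)"
proof -
  have "(\<Sum>k. (cmod (a k))\<^sup>2 * real (Suc k) ^ (2 * m)) = 0"
    using assms unfolding s_norm_def by simp
  then have "\<forall>k. (cmod (a k))\<^sup>2 * real (Suc k) ^ (2 * m) = 0"
    using assms(1) unfolding s_fin_def by (subst (asm) suminf_eq_zero_iff) auto
  then show ?thesis by auto
qed

lemma zero_fins: "s_fin m (\<lambda>k. 0)" "sd_fin m (\<lambda>k. 0)" "(\<lambda>k. 0) \<in> sd_space"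
  "s_norm m (\<lambda>k. 0) = 0" "sd_norm m (\<lambda>k. 0) = 0"
  by (auto simp: s_fin_def sd_fin_def s_norm_def sd_norm_def sd_space_def)

lemma scale_fins:
  assumes "sd_fin m a" shows "sd_fin m (\<lambda>k. c * a k)" "sd_norm m (\<lambda>k. c * a k) = cmod c * sd_norm m a"
proof -
  have e: "(\<lambda>k. (cmod (c * a k))\<^sup>2 / real (Suc k) ^ (2 * m)) = (\<lambda>k. (cmod c)\<^sup>2 * ((cmod (a k))\<^sup>2 / real (Suc k) ^ (2 * m)))"
    by (simp add: norm_mult power_mult_distrib)
  show "sd_fin m (\<lambda>k. c * a k)" using assms unfolding sd_fin_def e by (rule summable_mult)
  show "sd_norm m (\<lambda>k. c * a k) = cmod c * sd_norm m a"
    using assms unfolding sd_norm_def sd_fin_def e by (subst suminf_mult) (auto simp: real_sqrt_mult simp del: power_mult_distrib)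
qed

lemma scale_sfins:
  assumes "s_fin m a" shows "s_fin m (\<lambda>k. c * a k)" "s_norm m (\<lambda>k. c * a k) = cmod c * s_norm m a"
proof -
  have e: "(\<lambda>k. (cmod (c * a k))\<^sup>2 * real (Suc k) ^ (2 * m)) = (\<lambda>k. (cmod c)\<^sup>2 * ((cmod (a k))\<^sup>2 * real (Suc k) ^ (2 * m)))"
    by (simp add: norm_mult power_mult_distrib mult.assoc)
  show "s_fin m (\<lambda>k. c * a k)" using assms unfolding s_fin_def e by (rule summable_mult)
  show "s_norm m (\<lambda>k. c * a k) = cmod c * s_norm m a"
    using assms unfolding s_norm_def s_fin_def e by (subst suminf_mult) (auto simp: real_sqrt_mult simp del: power_mult_distrib)
qed

lemma scale_space: "a \<in> sd_space \<Longrightarrow> (\<lambda>k. c * a k) \<in> sd_space"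
  unfolding sd_space_def using scale_fins by blast

definition Emul :: "nat \<Rightarrow> cseq \<Rightarrow> cseq" where
  "Emul p a = (\<lambda>k. complex_of_real (real (Suc k) ^ p) * a k)"

lemma cmod_Emul: "cmod (Emul p a k) = real (Suc k) ^ p * cmod (a k)"
  by (simp add: Emul_def norm_mult norm_power)

lemma Emul_s_eq: "(\<lambda>k. (cmod (Emul p a k))\<^sup>2 * real (Suc k) ^ (2 * m)) = (\<lambda>k. (cmod (a k))\<^sup>2 * real (Suc k) ^ (2 * (m + p)))"
  by (rule ext) (simp add: cmod_Emul power_mult_distrib power_add power_mult[symmetric] algebra_simps)

lemma Emul_sfin: "s_fin m (Emul p a) = s_fin (m + p) a"
  unfolding s_fin_def Emul_s_eq ..
lemma Emul_snorm: "s_norm m (Emul p a) = s_norm (m + p) a"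
  unfolding s_norm_def Emul_s_eq ..

lemma Emul_sd_eq: assumes "m \<le> p"
  shows "(\<lambda>k. (cmod (Emul p a k))\<^sup>2 / real (Suc k) ^ (2 * m)) = (\<lambda>k. (cmod (a k))\<^sup>2 * real (Suc k) ^ (2 * (p - m)))"
proof (rule ext)
  fix k
  have "2 * p = 2 * m + 2 * (p - m)" using assms by simp
  then have "real (Suc k) ^ (2 * p) = real (Suc k) ^ (2 * m) * real (Suc k) ^ (2 * (p - m))"
    by (metis power_add)
  moreover have "(cmod (Emul p a k))\<^sup>2 = (cmod (a k))\<^sup>2 * real (Suc k) ^ (2 * p)"
    by (simp add: cmod_Emul power_mult_distrib power_mult[symmetric] mult.commute)
  ultimately show "(cmod (Emul p a k))\<^sup>2 / real (Suc k) ^ (2 * m) = (cmod (a k))\<^sup>2 * real (Suc k) ^ (2 * (p - m))"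
    by simp
qed

lemma Emul_sdfin: assumes "m \<le> p" shows "sd_fin m (Emul p a) = s_fin (p - m) a"
  unfolding sd_fin_def s_fin_def Emul_sd_eq[OF assms] ..
lemma Emul_sdnorm: assumes "m \<le> p" shows "sd_norm m (Emul p a) = s_norm (p - m) a"
  unfolding sd_norm_def s_norm_def Emul_sd_eq[OF assms] ..

lemma Emul_space: "a \<in> s_space \<Longrightarrow> Emul p a \<in> s_space"
  unfolding s_space_def by (auto simp: Emul_sfin intro: s_space_fin[unfolded s_space_def])

lemma SS_space: "x \<in> SS \<Longrightarrow> \<xi> \<in> sd_space \<Longrightarrow> x \<xi> \<in> s_space"
  unfolding SS_def by blast

lemma SS_hom: assumes "x \<in> SS" "\<xi> \<in> sd_space" shows "x (\<lambda>k. c * \<xi> k) = (\<lambda>k. c * x \<xi> k)"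
proof -
  have "x (\<lambda>k. c * \<xi> k + 0 * \<xi> k) = (\<lambda>k. c * x \<xi> k + 0 * x \<xi> k)"
    using assms unfolding SS_def by blast
  then show ?thesis by simp
qed

lemma SS_bound: assumes "x \<in> SS" shows "\<exists>C\<ge>0. \<forall>\<xi>. sd_fin k \<xi> \<longrightarrow> s_norm m (x \<xi>) \<le> C * sd_norm k \<xi>"
proof -
  obtain C where C: "\<forall>\<xi>. sd_fin k \<xi> \<longrightarrow> s_norm m (x \<xi>) \<le> C * sd_norm k \<xi>"
    using assms unfolding SS_def by blast
  show ?thesis
  proof (intro exI[of _ "max C 0"] conjI allI impI)
    fix \<xi> assume h: "sd_fin k \<xi>"
    have "C * sd_norm k \<xi> \<le> max C 0 * sd_norm k \<xi>"
      by (rule mult_right_mono) (auto intro: sdnorm_nonneg[OF h])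
    then show "s_norm m (x \<xi>) \<le> max C 0 * sd_norm k \<xi>" using C h by auto
  qed auto
qed

definition good :: "nat \<Rightarrow> (cseq \<Rightarrow> cseq) \<Rightarrow> bool" where
  "good m f \<longleftrightarrow> (\<forall>\<xi>\<in>sd_space. f \<xi> \<in> s_space) \<and> (\<forall>\<xi>\<in>sd_space. \<forall>c. f (\<lambda>k. c * \<xi> k) = (\<lambda>k. c * f \<xi> k))
     \<and> (\<exists>C\<ge>0. \<forall>\<xi>. sd_fin m \<xi> \<longrightarrow> s_norm m (f \<xi>) \<le> C * sd_norm m \<xi>)"

lemma good_SS: assumes "x \<in> SS" shows "good m x"
proof -
  have "\<forall>\<xi>\<in>sd_space. x \<xi> \<in> s_space" using SS_space[OF assms] by blast
  moreover have "\<forall>\<xi>\<in>sd_space. \<forall>c. x (\<lambda>k. c * \<xi> k) = (\<lambda>k. c * x \<xi> k)" using SS_hom[OF assms] by blast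
  ultimately show ?thesis unfolding good_def using SS_bound[OF assms, of m m] by (simp only: simp_thms)
qed

lemma good_smult: assumes x: "x \<in> SS" and y: "y \<in> SS" shows "good m (smult y x)"
proof -
  obtain C1 where C1: "C1 \<ge> 0" "\<forall>\<xi>. sd_fin 0 \<xi> \<longrightarrow> s_norm m (y \<xi>) \<le> C1 * sd_norm 0 \<xi>"
    using SS_bound[OF y, of 0 m] by blast
  obtain C2 where C2: "C2 \<ge> 0" "\<forall>\<xi>. sd_fin m \<xi> \<longrightarrow> s_norm 0 (x \<xi>) \<le> C2 * sd_norm m \<xi>"
    using SS_bound[OF x, of m 0] by blast
  have "s_norm m (y (x \<xi>)) \<le> (C1 * C2) * sd_norm m \<xi>" if h: "sd_fin m \<xi>" for \<xi>
  proof -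
    have xs: "x \<xi> \<in> s_space" using SS_space[OF x sdfin_space[OF h]] .
    have "sd_fin 0 (x \<xi>)" using sfin_sdfin[OF s_space_fin[OF xs]] .
    then have "s_norm m (y (x \<xi>)) \<le> C1 * sd_norm 0 (x \<xi>)" using C1 by blast
    also have "\<dots> = C1 * s_norm 0 (x \<xi>)" by (simp add: snorm0_sdnorm0)
    also have "\<dots> \<le> C1 * (C2 * sd_norm m \<xi>)" using C1(1) C2 h by (intro mult_left_mono) auto
    finally show ?thesis by simp
  qed
  moreover have "C1 * C2 \<ge> 0" using C1 C2 by simp
  ultimately have "\<exists>C\<ge>0. \<forall>\<xi>. sd_fin m \<xi> \<longrightarrow> s_norm m (y (x \<xi>)) \<le> C * sd_norm m \<xi>" by blast
  moreover have "\<forall>\<xi>\<in>sd_space. y (x \<xi>) \<in> s_space"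
    using x y SS_space s_space_sd by blast
  moreover have "\<forall>\<xi>\<in>sd_space. \<forall>c. y (x (\<lambda>k. c * \<xi> k)) = (\<lambda>k. c * y (x \<xi>) k)"
    using x y SS_space SS_hom s_space_sd by simp
  ultimately show ?thesis unfolding good_def smult_def by blast
qed

definition Bl :: "nat \<Rightarrow> cseq set" where
  "Bl m = {\<xi>. \<xi> \<in> sd_space \<and> sd_fin m \<xi> \<and> sd_norm m \<xi> \<le> 1}"

lemma op_norm_eq: "op_norm m f = Sup ((\<lambda>\<xi>. s_norm m (f \<xi>)) ` Bl m)"
  unfolding op_norm_def Bl_def by (simp add: setcompr_eq_image)

lemma Bl_zero: "(\<lambda>k. 0) \<in> Bl m"
  unfolding Bl_def using zero_fins by auto

lemma good_zero: assumes "good m f" shows "f (\<lambda>k. 0) = (\<lambda>k. 0)"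
proof -
  have "\<forall>\<xi>\<in>sd_space. \<forall>c. f (\<lambda>k. c * \<xi> k) = (\<lambda>k. c * f \<xi> k)" using assms unfolding good_def by simp
  then have "\<forall>c. f (\<lambda>k. c * 0) = (\<lambda>k. c * f (\<lambda>k. 0) k)" using zero_fins(3) by (rule bspec)
  from spec[OF this, of 0] show ?thesis by simp
qed

lemma good_bdd: assumes "good m f" shows "bdd_above ((\<lambda>\<xi>. s_norm m (f \<xi>)) ` Bl m)"
proof -
  obtain C where C: "C \<ge> 0" "\<forall>\<xi>. sd_fin m \<xi> \<longrightarrow> s_norm m (f \<xi>) \<le> C * sd_norm m \<xi>"
    using assms unfolding good_def by blast
  show ?thesis
  proof (rule bdd_aboveI2)
    fix \<xi> assume "\<xi> \<in> Bl m"
    then have h: "sd_fin m \<xi>" "sd_norm m \<xi> \<le> 1" unfolding Bl_def by auto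
    have "s_norm m (f \<xi>) \<le> C * sd_norm m \<xi>" using C h by blast
    also have "\<dots> \<le> C * 1" using C(1) h by (intro mult_left_mono) auto
    finally show "s_norm m (f \<xi>) \<le> C" by simp
  qed
qed

lemma opn_upper: assumes "good m f" "\<xi> \<in> Bl m" shows "s_norm m (f \<xi>) \<le> op_norm m f"
  unfolding op_norm_eq by (rule cSup_upper[OF imageI[OF assms(2)] good_bdd[OF assms(1)]])

lemma opn_nonneg: assumes "good m f" shows "0 \<le> op_norm m f"
  using opn_upper[OF assms Bl_zero] unfolding good_zero[OF assms] zero_fins(4) .

lemma opn_least: assumes h: "\<And>\<xi>. \<xi> \<in> Bl m \<Longrightarrow> s_norm m (f \<xi>) \<le> c" shows "op_norm m f \<le> c"
  unfolding op_norm_eq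
proof (rule cSup_least)
  show "(\<lambda>\<xi>. s_norm m (f \<xi>)) ` Bl m \<noteq> {}" using Bl_zero by blast
  fix v assume "v \<in> (\<lambda>\<xi>. s_norm m (f \<xi>)) ` Bl m"
  then obtain \<xi> where "\<xi> \<in> Bl m" "v = s_norm m (f \<xi>)" by blast
  then show "v \<le> c" using h by simp
qed

lemma opn_bound:
  assumes g: "good m f" and z: "\<zeta> \<in> sd_space" "sd_fin m \<zeta>"
  shows "s_norm m (f \<zeta>) \<le> op_norm m f * sd_norm m \<zeta>"
proof (cases "sd_norm m \<zeta> = 0")
  case True
  then have "\<zeta> = (\<lambda>k. 0)" using sdnorm_zero z by blast
  then show ?thesis using good_zero[OF g] zero_fins by simp
next
  case False
  define d where "d = sd_norm m \<zeta>"
  have dp: "d > 0" using False sdnorm_nonneg[OF z(2)] by (simp add: d_def)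
  define \<zeta>' where "\<zeta>' = (\<lambda>k. complex_of_real (1 / d) * \<zeta> k)"
  have "sd_norm m \<zeta>' = cmod (complex_of_real (1 / d)) * d"
    unfolding \<zeta>'_def d_def by (rule scale_fins(2)[OF z(2)])
  also have "\<dots> = 1" using dp by (simp add: norm_divide)
  moreover have "\<zeta>' \<in> sd_space" unfolding \<zeta>'_def by (rule scale_space[OF z(1)])
  moreover have "sd_fin m \<zeta>'" unfolding \<zeta>'_def by (rule scale_fins(1)[OF z(2)])
  ultimately have "\<zeta>' \<in> Bl m" unfolding Bl_def by simp
  then have "s_norm m (f \<zeta>') \<le> op_norm m f" by (rule opn_upper[OF g])
  have hom: "\<And>\<xi> c. \<xi> \<in> sd_space \<Longrightarrow> f (\<lambda>k. c * \<xi> k) = (\<lambda>k. c * f \<xi> k)"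
    using g unfolding good_def by blast
  have B: "f \<zeta>' = (\<lambda>k. complex_of_real (1 / d) * f \<zeta> k)"
    unfolding \<zeta>'_def by (rule hom[OF z(1)])
  have sf: "s_fin m (f \<zeta>)"
    using g z(1) s_space_fin unfolding good_def by blast
  have C: "s_norm m (\<lambda>k. complex_of_real (1 / d) * f \<zeta> k) = cmod (complex_of_real (1 / d)) * s_norm m (f \<zeta>)"
    by (rule scale_sfins(2)[OF sf])
  have D: "cmod (complex_of_real (1 / d)) = 1 / d" using dp by (simp add: norm_divide)
  have E: "s_norm m (f \<zeta>') = 1 / d * s_norm m (f \<zeta>)" unfolding B C D by (rule refl)
  have "1 / d * s_norm m (f \<zeta>) \<le> op_norm m f" using \<open>s_norm m (f \<zeta>') \<le> op_norm m f\<close> unfolding E .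
  then have "d * (1 / d * s_norm m (f \<zeta>)) \<le> d * op_norm m f"
    using dp by (intro mult_left_mono) auto
  then have "s_norm m (f \<zeta>) \<le> d * op_norm m f" using dp by simp
  then show ?thesis unfolding d_def by (simp only: mult.commute)
qed

lemma sq_wp: "(r * real (Suc k) ^ p)\<^sup>2 = r\<^sup>2 * real (Suc k) ^ (2 * p)"
  by (simp add: power_mult_distrib power_even_eq)
lemma sq_wpd: "(r / real (Suc k) ^ p)\<^sup>2 = r\<^sup>2 / real (Suc k) ^ (2 * p)"
  by (simp add: power_divide power_even_eq)

lemma P1:
  assumes u: "s_fin p u" and v: "sd_fin p v"
  shows "summable (\<lambda>k. u k * cnj (v k))" "cmod (pair u v) \<le> s_norm p u * sd_norm p v"
    "summable (\<lambda>k. v k * cnj (u k))" "cmod (pair v u) \<le> s_norm p u * sd_norm p v"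
proof -
  let ?a = "\<lambda>k. cmod (u k) * real (Suc k) ^ p" and ?b = "\<lambda>k. cmod (v k) / real (Suc k) ^ p"
  have sa: "summable (\<lambda>k. (?a k)\<^sup>2)" using u unfolding s_fin_def sq_wp .
  have sb: "summable (\<lambda>k. (?b k)\<^sup>2)" using v unfolding sd_fin_def sq_wpd .
  have ea: "sqrt (\<Sum>k. (?a k)\<^sup>2) = s_norm p u" unfolding s_norm_def sq_wp ..
  have eb: "sqrt (\<Sum>k. (?b k)\<^sup>2) = sd_norm p v" unfolding sd_norm_def sq_wpd ..
  have ab: "?a k * ?b k = cmod (u k) * cmod (v k)" for k
  proof -
    have "real (Suc k) ^ p > 0" by simp
    then show ?thesis by (simp add: field_simps)
  qed
  have f1: "cmod (u k * cnj (v k)) \<le> ?a k * ?b k" for k unfolding ab by (simp add: norm_mult)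
  have f2: "cmod (v k * cnj (u k)) \<le> ?a k * ?b k" for k unfolding ab by (simp add: norm_mult)
  have a0: "\<And>k. 0 \<le> ?a k" and b0: "\<And>k. 0 \<le> ?b k" by simp_all
  show "summable (\<lambda>k. u k * cnj (v k))" "summable (\<lambda>k. v k * cnj (u k))"
    using cs_core(1)[OF f1 a0 b0 sa sb] cs_core(1)[OF f2 a0 b0 sa sb] by -
  show "cmod (pair u v) \<le> s_norm p u * sd_norm p v" "cmod (pair v u) \<le> s_norm p u * sd_norm p v"
    unfolding pair_def using cs_core(2)[OF f1 a0 b0 sa sb] cs_core(2)[OF f2 a0 b0 sa sb] unfolding ea eb by -
qed

lemma P_sym: assumes "summable (\<lambda>k. a k * cnj (b k))" shows "pair b a = cnj (pair a b)"
proof -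
  have "(\<lambda>k. a k * cnj (b k)) sums pair a b" using assms unfolding pair_def by (rule summable_sums)
  then have "(\<lambda>k. cnj (a k * cnj (b k))) sums cnj (pair a b)" by (simp only: sums_cnj)
  then have "(\<lambda>k. b k * cnj (a k)) sums cnj (pair a b)" by (simp add: mult.commute)
  then show ?thesis unfolding pair_def by (rule sums_unique[symmetric])
qed

lemma pair_Emul_swap: "pair (Emul p a) b = pair a (Emul p b)"
  unfolding pair_def Emul_def by (simp add: mult_ac)

lemma Emul_Emul: "Emul p (Emul q a) = Emul (p + q) a"
  unfolding Emul_def by (simp add: power_add mult_ac)

lemma Emul_0: "Emul 0 a = a" unfolding Emul_def by simp

lemma P_E: assumes "s_fin q u" shows "pair u (Emul (2 * q) u) = complex_of_real ((s_norm q u)\<^sup>2)"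
proof -
  have e: "(\<lambda>k. u k * cnj (Emul (2 * q) u k)) = (\<lambda>k. complex_of_real ((cmod (u k))\<^sup>2 * real (Suc k) ^ (2 * q)))"
  proof (rule ext)
    fix k
    have "u k * cnj (Emul (2 * q) u k) = complex_of_real (real (Suc k) ^ (2 * q)) * (u k * cnj (u k))"
      unfolding Emul_def by simp
    also have "\<dots> = complex_of_real ((cmod (u k))\<^sup>2 * real (Suc k) ^ (2 * q))"
      unfolding complex_norm_square[symmetric] of_real_mult by (simp only: mult.commute)
    finally show "u k * cnj (Emul (2 * q) u k) = complex_of_real ((cmod (u k))\<^sup>2 * real (Suc k) ^ (2 * q))" .
  qed
  show ?thesis unfolding pair_def e snorm_sq[OF assms]
    using assms unfolding s_fin_def by (rule suminf_of_real[symmetric])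
qed

lemma P_E': assumes "s_fin q u" shows "pair (Emul (2 * q) u) u = complex_of_real ((s_norm q u)\<^sup>2)"
proof -
  have "pair (Emul (2 * q) u) u = pair u (Emul (2 * q) u)"
    by (rule pair_Emul_swap)
  then show ?thesis using P_E[OF assms] by simp
qed

lemma P_self: assumes "s_fin 0 u" shows "pair u u = complex_of_real ((s_norm 0 u)\<^sup>2)"
  using P_E[OF assms] by (simp add: Emul_0)

lemma P_mixed:
  assumes a: "s_fin q a" and b: "s_fin 0 b"
  shows "cmod (pair a (Emul q b)) \<le> s_norm q a * s_norm 0 b"
proof -
  let ?a = "\<lambda>k. cmod (a k) * real (Suc k) ^ q" and ?b = "\<lambda>k. cmod (b k)"
  have sa: "summable (\<lambda>k. (?a k)\<^sup>2)" using a unfolding s_fin_def sq_wp .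
  have sb: "summable (\<lambda>k. (?b k)\<^sup>2)" using b unfolding s_fin_def by simp
  have ea: "sqrt (\<Sum>k. (?a k)\<^sup>2) = s_norm q a" unfolding s_norm_def sq_wp ..
  have eb: "sqrt (\<Sum>k. (?b k)\<^sup>2) = s_norm 0 b" unfolding s_norm_def by simp
  have f1: "cmod (a k * cnj (Emul q b k)) \<le> ?a k * ?b k" for k by (simp add: norm_mult cmod_Emul)
  have a0: "\<And>k. 0 \<le> ?a k" and b0: "\<And>k. 0 \<le> ?b k" by simp_all
  show ?thesis
    unfolding pair_def using cs_core(2)[OF f1 a0 b0 sa sb] unfolding ea eb .
qed

definition ipd :: "nat \<Rightarrow> cseq \<Rightarrow> cseq \<Rightarrow> complex" where
  "ipd n a b = (\<Sum>k. a k * cnj (b k) / complex_of_real (real (Suc k) ^ (2 * n)))"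

lemma ipd_bound:
  assumes a: "sd_fin n a" and b: "sd_fin n b"
  shows "summable (\<lambda>k. a k * cnj (b k) / complex_of_real (real (Suc k) ^ (2 * n)))"
    "cmod (ipd n a b) \<le> sd_norm n a * sd_norm n b"
proof -
  let ?a = "\<lambda>k. cmod (a k) / real (Suc k) ^ n" and ?b = "\<lambda>k. cmod (b k) / real (Suc k) ^ n"
  have sa: "summable (\<lambda>k. (?a k)\<^sup>2)" using a unfolding sd_fin_def sq_wpd .
  have sb: "summable (\<lambda>k. (?b k)\<^sup>2)" using b unfolding sd_fin_def sq_wpd .
  have ea: "sqrt (\<Sum>k. (?a k)\<^sup>2) = sd_norm n a" unfolding sd_norm_def sq_wpd ..
  have eb: "sqrt (\<Sum>k. (?b k)\<^sup>2) = sd_norm n b" unfolding sd_norm_def sq_wpd ..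
  have f1: "cmod (a k * cnj (b k) / complex_of_real (real (Suc k) ^ (2 * n))) \<le> ?a k * ?b k" for k
    by (simp add: norm_mult norm_divide norm_power power_even_eq power2_eq_square)
  have a0: "\<And>k. 0 \<le> ?a k" and b0: "\<And>k. 0 \<le> ?b k" by simp_all
  show "summable (\<lambda>k. a k * cnj (b k) / complex_of_real (real (Suc k) ^ (2 * n)))"
    using cs_core(1)[OF f1 a0 b0 sa sb] .
  show "cmod (ipd n a b) \<le> sd_norm n a * sd_norm n b"
    unfolding ipd_def using cs_core(2)[OF f1 a0 b0 sa sb] unfolding ea eb .
qed

lemma ipd_sym: assumes a: "sd_fin n a" and b: "sd_fin n b" shows "ipd n b a = cnj (ipd n a b)"
proof -
  have "(\<lambda>k. a k * cnj (b k) / complex_of_real (real (Suc k) ^ (2 * n))) sums ipd n a b"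
    unfolding ipd_def by (rule summable_sums[OF ipd_bound(1)[OF a b]])
  then have "(\<lambda>k. cnj (a k * cnj (b k) / complex_of_real (real (Suc k) ^ (2 * n)))) sums cnj (ipd n a b)"
    by (simp only: sums_cnj)
  then have "(\<lambda>k. b k * cnj (a k) / complex_of_real (real (Suc k) ^ (2 * n))) sums cnj (ipd n a b)"
    by (simp add: mult.commute)
  then show ?thesis unfolding ipd_def by (rule sums_unique[symmetric])
qed

lemma ipd_self: assumes a: "sd_fin n a" shows "ipd n a a = complex_of_real ((sd_norm n a)\<^sup>2)"
proof -
  have e: "(\<lambda>k. a k * cnj (a k) / complex_of_real (real (Suc k) ^ (2 * n))) = (\<lambda>k. complex_of_real ((cmod (a k))\<^sup>2 / real (Suc k) ^ (2 * n)))"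
    by (rule ext) (simp only: complex_norm_square[symmetric] of_real_divide of_real_power of_real_of_nat_eq)
  show ?thesis unfolding ipd_def e sdnorm_sq[OF assms]
    using assms unfolding sd_fin_def by (rule suminf_of_real[symmetric])
qed

lemma ipd_Emul: "ipd n (Emul (2 * n) a) b = pair a b"
  unfolding ipd_def pair_def Emul_def by simp

definition adj :: "(cseq \<Rightarrow> cseq) \<Rightarrow> (cseq \<Rightarrow> cseq) \<Rightarrow> bool" where
  "adj y x \<longleftrightarrow> (\<forall>\<xi>\<in>sd_space. \<forall>\<eta>\<in>sd_space. pair (y \<xi>) \<eta> = pair \<xi> (x \<eta>))"

lemma is_adjoint_adj: "is_adjoint y x \<longleftrightarrow> y \<in> SS \<and> adj y x"
  unfolding is_adjoint_def adj_def by simp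

lemma adjD: "adj y x \<Longrightarrow> a \<in> sd_space \<Longrightarrow> b \<in> sd_space \<Longrightarrow> pair (y a) b = pair a (x b)"
  unfolding adj_def by blast

lemma pair_summ:
  assumes u: "u \<in> s_space" and v: "v \<in> sd_space"
  shows "summable (\<lambda>k. u k * cnj (v k))" "summable (\<lambda>k. v k * cnj (u k))"
proof -
  obtain p where p: "sd_fin p v" using sd_space_fin[OF v] by blast
  have "s_fin p u" by (rule s_space_fin[OF u])
  from P1[OF this p] show "summable (\<lambda>k. u k * cnj (v k))" "summable (\<lambda>k. v k * cnj (u k))" by simp_all
qed

lemma adj_swap:
  assumes x: "x \<in> SS" and y: "y \<in> SS" and a: "adj y x"
  shows "adj x y"
  unfolding adj_def
proof (intro ballI)
  fix a b assume ha: "a \<in> sd_space" and hb: "b \<in> sd_space"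
  have xa: "x a \<in> s_space" by (rule SS_space[OF x ha])
  have yb: "y b \<in> s_space" by (rule SS_space[OF y hb])
  have "pair (x a) b = cnj (pair b (x a))" by (rule P_sym[OF pair_summ(2)[OF xa hb]])
  also have "pair b (x a) = pair (y b) a" using adjD[OF a hb ha] by simp
  also have "pair (y b) a = cnj (pair a (y b))" by (rule P_sym[OF pair_summ(2)[OF yb ha]])
  finally show "pair (x a) b = pair a (y b)" by simp
qed

lemma s_to_sd: "a \<in> s_space \<Longrightarrow> sd_fin m a"
  by (rule sfin_sdfin[OF s_space_fin])

lemma sfin0_space: "s_fin 0 a \<Longrightarrow> a \<in> sd_space"
  by (rule sdfin_space[of 0]) (simp add: sfin0_sdfin0)

lemma R1:
  assumes x: "x \<in> SS" and y: "y \<in> SS" and a: "adj y x" and g: "s_fin 0 \<gamma>"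
  shows "(s_norm 0 (x (Emul (2 * n) \<gamma>)))\<^sup>2 \<le> op_norm (2 * n) (smult y x) * (s_norm 0 \<gamma>)\<^sup>2"
proof -
  let ?P = "op_norm (2 * n) (smult y x)"
  define \<zeta> where "\<zeta> = Emul (2 * n) \<gamma>"
  have zf: "sd_fin (2 * n) \<zeta>" unfolding \<zeta>_def using Emul_sdfin[of "2 * n" "2 * n" \<gamma>] g by simp
  have zs: "\<zeta> \<in> sd_space" by (rule sdfin_space[OF zf])
  have zn: "sd_norm (2 * n) \<zeta> = s_norm 0 \<gamma>" unfolding \<zeta>_def using Emul_sdnorm[of "2 * n" "2 * n" \<gamma>] by simp
  define u where "u = x \<zeta>"
  have us: "u \<in> s_space" unfolding u_def by (rule SS_space[OF x zs])
  have yus: "y u \<in> s_space" by (rule SS_space[OF y s_space_sd[OF us]])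
  have "complex_of_real ((s_norm 0 u)\<^sup>2) = pair u u" by (rule P_self[OF s_space_fin[OF us], symmetric])
  also have "\<dots> = pair (y u) \<zeta>" unfolding u_def using adjD[OF a s_space_sd[OF us] zs] u_def by simp
  finally have e: "complex_of_real ((s_norm 0 u)\<^sup>2) = pair (y u) (Emul (2 * n) \<gamma>)" unfolding \<zeta>_def .
  have "(s_norm 0 u)\<^sup>2 = cmod (pair (y u) (Emul (2 * n) \<gamma>))" unfolding e[symmetric] norm_of_real by simp
  also have "\<dots> \<le> s_norm (2 * n) (y u) * s_norm 0 \<gamma>" by (rule P_mixed[OF s_space_fin[OF yus] g])
  also have "s_norm (2 * n) (y u) \<le> ?P * s_norm 0 \<gamma>"
    using opn_bound[OF good_smult[OF x y] zs zf] unfolding zn smult_def u_def .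
  then have "s_norm (2 * n) (y u) * s_norm 0 \<gamma> \<le> ?P * s_norm 0 \<gamma> * s_norm 0 \<gamma>"
    by (rule mult_right_mono) (rule snorm_nonneg[OF g])
  finally show ?thesis unfolding u_def \<zeta>_def by (simp add: power2_eq_square mult.assoc)
qed

lemma R2:
  assumes x: "x \<in> SS" and y: "y \<in> SS" and a: "adj y x" and b: "s_fin 0 \<beta>"
  shows "s_norm 0 (Emul (2 * n) (y \<beta>)) \<le> sqrt (op_norm (2 * n) (smult y x)) * s_norm 0 \<beta>"
proof -
  let ?P = "op_norm (2 * n) (smult y x)"
  have P0: "?P \<ge> 0" by (rule opn_nonneg[OF good_smult[OF x y]])
  have bs: "\<beta> \<in> sd_space" by (rule sfin0_space[OF b])
  define v where "v = y \<beta>"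
  have vs: "v \<in> s_space" unfolding v_def by (rule SS_space[OF y bs])
  define \<gamma> where "\<gamma> = Emul (2 * n) v"
  have gs: "\<gamma> \<in> s_space" unfolding \<gamma>_def by (rule Emul_space[OF vs])
  have g0: "s_fin 0 \<gamma>" by (rule s_space_fin[OF gs])
  have egs: "Emul (2 * n) \<gamma> \<in> s_space" by (rule Emul_space[OF gs])
  define g where "g = s_norm 0 \<gamma>"
  have gnn: "g \<ge> 0" unfolding g_def by (rule snorm_nonneg[OF g0])
  have gv: "g = s_norm (2 * n) v" unfolding g_def \<gamma>_def Emul_snorm by simp
  have "complex_of_real (g\<^sup>2) = pair v (Emul (2 * (2 * n)) v)"
    unfolding gv by (rule P_E[OF s_space_fin[OF vs], symmetric])
  also have "Emul (2 * (2 * n)) v = Emul (2 * n) \<gamma>" unfolding \<gamma>_def Emul_Emul by simp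
  also have "pair v (Emul (2 * n) \<gamma>) = pair \<beta> (x (Emul (2 * n) \<gamma>))"
    unfolding v_def by (rule adjD[OF a bs s_space_sd[OF egs]])
  finally have e: "complex_of_real (g\<^sup>2) = pair \<beta> (x (Emul (2 * n) \<gamma>))" .
  have xes: "x (Emul (2 * n) \<gamma>) \<in> s_space" by (rule SS_space[OF x s_space_sd[OF egs]])
  have "g\<^sup>2 = cmod (pair \<beta> (x (Emul (2 * n) \<gamma>)))" unfolding e[symmetric] norm_of_real by simp
  also have "\<dots> \<le> s_norm 0 (x (Emul (2 * n) \<gamma>)) * sd_norm 0 \<beta>"
    by (rule P1(4)[OF s_space_fin[OF xes]]) (simp add: sfin0_sdfin0 b)
  also have "sd_norm 0 \<beta> = s_norm 0 \<beta>" by (rule snorm0_sdnorm0)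
  also have "s_norm 0 (x (Emul (2 * n) \<gamma>)) \<le> sqrt ?P * g"
  proof -
    have "(s_norm 0 (x (Emul (2 * n) \<gamma>)))\<^sup>2 \<le> ?P * g\<^sup>2" unfolding g_def by (rule R1[OF x y a g0])
    then have "s_norm 0 (x (Emul (2 * n) \<gamma>)) \<le> sqrt (?P * g\<^sup>2)" by (rule real_le_rsqrt)
    also have "sqrt (?P * g\<^sup>2) = sqrt ?P * g" using gnn by (simp add: real_sqrt_mult)
    finally show ?thesis .
  qed
  then have "s_norm 0 (x (Emul (2 * n) \<gamma>)) * s_norm 0 \<beta> \<le> sqrt ?P * g * s_norm 0 \<beta>"
    by (rule mult_right_mono) (rule snorm_nonneg[OF b])
  finally have h: "g * g \<le> g * (sqrt ?P * s_norm 0 \<beta>)" by (simp add: power2_eq_square mult_ac)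
  have "g \<le> sqrt ?P * s_norm 0 \<beta>"
  proof (cases "g = 0")
    case True
    then show ?thesis using P0 snorm_nonneg[OF b] by simp
  next
    case False
    then have "g > 0" using gnn by simp
    then show ?thesis using h by simp
  qed
  then show ?thesis unfolding g_def \<gamma>_def v_def .
qed

lemma final_real:
  fixes a0 a1 L K :: real
  assumes a0: "0 \<le> a0" "a0 \<le> 1" and a1: "0 \<le> a1" and L: "0 \<le> L"
    and h: "\<And>j. a1 ^ Suc j * a0 \<le> K * L ^ j"
  shows "a1 * a0 \<le> L"
proof (rule ccontr)
  assume "\<not> a1 * a0 \<le> L"
  then have c: "a1 * a0 > L" by simp
  have "a1 * a0 \<le> a1" using a0 a1 by (simp add: mult_left_le)
  then have a1L: "a1 > L" using c by simp
  have a0p: "a0 > 0" using c L a0 by (cases "a0 = 0") auto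
  show False
  proof (cases "L = 0")
    case True
    have "a1 ^ Suc 1 * a0 \<le> K * L ^ 1" by (rule h)
    then have "a1 * a1 * a0 \<le> 0" using True by (simp add: power2_eq_square)
    moreover have "a1 * a1 * a0 > 0" using a1L True a0p by simp
    ultimately show False by simp
  next
    case False
    then have Lp: "L > 0" using L by simp
    define r where "r = a1 / L"
    have r1: "r > 1" unfolding r_def using a1L Lp by simp
    have aa: "a1 * a0 > 0" using a1L Lp a0p by simp
    obtain j where j: "K / (a1 * a0) < r ^ j" using real_arch_pow[OF r1] by blast
    have a1e: "a1 = r * L" unfolding r_def using Lp by simp
    have eq: "a1 ^ Suc j * a0 = (a1 * a0 * r ^ j) * L ^ j"
    proof -
      have "a1 ^ j = r ^ j * L ^ j" unfolding a1e by (rule power_mult_distrib)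
      then show ?thesis by (simp add: mult_ac)
    qed
    have "(a1 * a0 * r ^ j) * L ^ j \<le> K * L ^ j" using h[of j] unfolding eq .
    then have "a1 * a0 * r ^ j \<le> K" using Lp by simp
    then have "r ^ j \<le> K / (a1 * a0)" using aa by (simp add: field_simps)
    then show False using j by simp
  qed
qed

section \<open>Main inequality\<close>

lemma main_iii:
  assumes x: "x \<in> SS" and y: "y \<in> SS" and a: "adj y x" and xi: "\<xi> \<in> Bl n"
  shows "(s_norm n (x \<xi>))\<^sup>2 \<le> sqrt (op_norm (2 * n) (smult y x)) * sqrt (op_norm (2 * n) (smult x y))"
proof -
  let ?P = "op_norm (2 * n) (smult y x)" and ?Q = "op_norm (2 * n) (smult x y)"
  have P0: "?P \<ge> 0" by (rule opn_nonneg[OF good_smult[OF x y]])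
  have Q0: "?Q \<ge> 0" by (rule opn_nonneg[OF good_smult[OF y x]])
  have a': "adj x y" by (rule adj_swap[OF x y a])
  have xis: "\<xi> \<in> sd_space" and xif: "sd_fin n \<xi>" and xin: "sd_norm n \<xi> \<le> 1"
    using xi unfolding Bl_def by auto
  define E where "E = Emul (2 * n)"
  define S where "S = (\<lambda>\<zeta>. E (y (E (x \<zeta>))))"
  have Ss: "S \<zeta> \<in> s_space" if "\<zeta> \<in> sd_space" for \<zeta>
  proof -
    have "x \<zeta> \<in> s_space" by (rule SS_space[OF x that])
    then have "E (x \<zeta>) \<in> s_space" unfolding E_def by (rule Emul_space)
    then have "y (E (x \<zeta>)) \<in> s_space" by (rule SS_space[OF y s_space_sd])
    then show ?thesis unfolding S_def E_def by (rule Emul_space)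
  qed
  have it: "(S ^^ k) \<xi> \<in> sd_space \<and> sd_fin n ((S ^^ k) \<xi>)" for k
  proof (induction k)
    case 0 then show ?case using xis xif by simp
  next
    case (Suc k)
    have "(S ^^ Suc k) \<xi> = S ((S ^^ k) \<xi>)" by simp
    moreover have "S ((S ^^ k) \<xi>) \<in> s_space" using Ss Suc by blast
    ultimately show ?case using s_space_sd s_to_sd by simp
  qed
  define A where "A = (\<lambda>k. sd_norm n ((S ^^ k) \<xi>))"
  have A0: "A k \<ge> 0" for k unfolding A_def using it sdnorm_nonneg by blast
  have ipS: "ipd n (S u) v = pair (E (x u)) (x v)" if "u \<in> sd_space" "v \<in> sd_space" for u v
  proof -
    have "E (x u) \<in> s_space" unfolding E_def by (rule Emul_space[OF SS_space[OF x that(1)]])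
    have "ipd n (S u) v = pair (y (E (x u))) v" unfolding S_def E_def by (rule ipd_Emul)
    also have "\<dots> = pair (E (x u)) (x v)" by (rule adjD[OF a s_space_sd[OF \<open>E (x u) \<in> s_space\<close>] that(2)])
    finally show ?thesis .
  qed
  have hsym: "pair (E (x v)) (x u) = cnj (pair (E (x u)) (x v))" if "u \<in> sd_space" "v \<in> sd_space" for u v
  proof -
    have xu: "x u \<in> s_space" by (rule SS_space[OF x that(1)])
    have exv: "E (x v) \<in> s_space" unfolding E_def by (rule Emul_space[OF SS_space[OF x that(2)]])
    have "pair (E (x v)) (x u) = cnj (pair (x u) (E (x v)))"
      by (rule P_sym[OF pair_summ(1)[OF xu s_space_sd[OF exv]]])
    also have "pair (x u) (E (x v)) = pair (E (x u)) (x v)" unfolding E_def by (rule pair_Emul_swap[symmetric])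
    finally show ?thesis .
  qed
  have sadj: "ipd n (S u) v = ipd n u (S v)" if "u \<in> sd_space" "sd_fin n u" "v \<in> sd_space" "sd_fin n v" for u v
  proof -
    have Sv: "sd_fin n (S v)" by (rule s_to_sd[OF Ss[OF that(3)]])
    have "ipd n (S u) v = pair (E (x u)) (x v)" by (rule ipS[OF that(1,3)])
    also have "\<dots> = cnj (pair (E (x v)) (x u))" using hsym[OF that(1,3)] by simp
    also have "pair (E (x v)) (x u) = ipd n (S v) u" by (rule ipS[OF that(3,1), symmetric])
    also have "cnj (ipd n (S v) u) = ipd n u (S v)" by (rule ipd_sym[OF Sv that(2), symmetric])
    finally show ?thesis .
  qed
  have logc: "(A (Suc k))\<^sup>2 \<le> A k * A (Suc (Suc k))" for k
  proof -
    define u where "u = (S ^^ k) \<xi>"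
    have us: "u \<in> sd_space" "sd_fin n u" unfolding u_def using it by auto
    have e1: "(S ^^ Suc k) \<xi> = S u" unfolding u_def by simp
    have e2: "(S ^^ Suc (Suc k)) \<xi> = S (S u)" unfolding u_def by simp
    have Sus: "S u \<in> sd_space" "sd_fin n (S u)" using it[of "Suc k"] unfolding e1 by auto
    have SSus: "sd_fin n (S (S u))" using it[of "Suc (Suc k)"] unfolding e2 by auto
    have "complex_of_real ((A (Suc k))\<^sup>2) = ipd n (S u) (S u)"
      unfolding A_def e1 by (rule ipd_self[OF Sus(2), symmetric])
    also have "\<dots> = ipd n u (S (S u))" by (rule sadj[OF us Sus])
    finally have e: "complex_of_real ((A (Suc k))\<^sup>2) = ipd n u (S (S u))" .
    have "(A (Suc k))\<^sup>2 = cmod (ipd n u (S (S u)))" unfolding e[symmetric] norm_of_real by simp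
    also have "\<dots> \<le> sd_norm n u * sd_norm n (S (S u))" by (rule ipd_bound(2)[OF us(2) SSus])
    also have "\<dots> = A k * A (Suc (Suc k))" unfolding A_def e2 u_def ..
    finally show ?thesis .
  qed
  have dstep: "(s_norm n (x \<xi>))\<^sup>2 \<le> A 1 * A 0"
  proof -
    have xxs: "x \<xi> \<in> s_space" by (rule SS_space[OF x xis])
    have "complex_of_real ((s_norm n (x \<xi>))\<^sup>2) = pair (E (x \<xi>)) (x \<xi>)"
      unfolding E_def by (rule P_E'[OF s_space_fin[OF xxs], symmetric])
    also have "\<dots> = ipd n (S \<xi>) \<xi>" by (rule ipS[OF xis xis, symmetric])
    finally have e: "complex_of_real ((s_norm n (x \<xi>))\<^sup>2) = ipd n (S \<xi>) \<xi>" .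
    have S1: "sd_fin n (S \<xi>)" by (rule s_to_sd[OF Ss[OF xis]])
    have "(s_norm n (x \<xi>))\<^sup>2 = cmod (ipd n (S \<xi>) \<xi>)" unfolding e[symmetric] norm_of_real by simp
    also have "\<dots> \<le> sd_norm n (S \<xi>) * sd_norm n \<xi>" by (rule ipd_bound(2)[OF S1 xif])
    also have "\<dots> = A 1 * A 0" unfolding A_def by simp
    finally show ?thesis .
  qed
  define T where "T = (\<lambda>b. E (x (E (y b))))"
  define B where "B = (\<lambda>j. (T ^^ j) (E (x \<xi>)))"
  have SB: "(S ^^ Suc j) \<xi> = E (y (B j))" for j
  proof (induction j)
    case 0 then show ?case unfolding B_def S_def by simp
  next
    case (Suc j)
    have "(S ^^ Suc (Suc j)) \<xi> = S ((S ^^ Suc j) \<xi>)" by simp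
    also have "\<dots> = S (E (y (B j)))" using Suc by simp
    also have "\<dots> = E (y (B (Suc j)))" unfolding S_def B_def T_def by simp
    finally show ?case .
  qed
  have Bs: "B j \<in> s_space" for j
  proof (induction j)
    case 0
    then show ?case unfolding B_def E_def by (simp add: Emul_space SS_space[OF x xis])
  next
    case (Suc j)
    have "y (B j) \<in> s_space" by (rule SS_space[OF y s_space_sd[OF Suc]])
    then have "E (y (B j)) \<in> s_space" unfolding E_def by (rule Emul_space)
    then have "x (E (y (B j))) \<in> s_space" by (rule SS_space[OF x s_space_sd])
    then have "E (x (E (y (B j)))) \<in> s_space" unfolding E_def by (rule Emul_space)
    then show ?case unfolding B_def T_def by simp
  qed
  define L where "L = sqrt ?P * sqrt ?Q"
  have L0: "L \<ge> 0" unfolding L_def using P0 Q0 by simp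
  define K0 where "K0 = s_norm 0 (B 0)"
  have Bb: "s_norm 0 (B j) \<le> L ^ j * K0" for j
  proof (induction j)
    case 0 then show ?case unfolding K0_def by simp
  next
    case (Suc j)
    have eyb: "E (y (B j)) \<in> s_space" unfolding E_def by (rule Emul_space[OF SS_space[OF y s_space_sd[OF Bs]]])
    have "B (Suc j) = E (x (E (y (B j))))" unfolding B_def T_def by simp
    then have "s_norm 0 (B (Suc j)) = s_norm 0 (Emul (2 * n) (x (E (y (B j)))))" unfolding E_def by simp
    also have "\<dots> \<le> sqrt ?Q * s_norm 0 (E (y (B j)))"
      by (rule R2[OF y x a' s_space_fin[OF eyb]])
    also have "s_norm 0 (E (y (B j))) \<le> sqrt ?P * s_norm 0 (B j)"
      unfolding E_def by (rule R2[OF x y a s_space_fin[OF Bs]])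
    then have "sqrt ?Q * s_norm 0 (E (y (B j))) \<le> sqrt ?Q * (sqrt ?P * s_norm 0 (B j))"
      using Q0 by (intro mult_left_mono) auto
    also have "\<dots> = L * s_norm 0 (B j)" unfolding L_def by (simp add: mult_ac)
    also have "\<dots> \<le> L * (L ^ j * K0)" using Suc L0 by (intro mult_left_mono) auto
    finally show ?case by (simp add: mult_ac)
  qed
  have Ab: "A (Suc j) \<le> (sqrt ?P * K0) * L ^ j" for j
  proof -
    have ybs: "y (B j) \<in> s_space" by (rule SS_space[OF y s_space_sd[OF Bs]])
    have "A (Suc j) = sd_norm n (Emul (2 * n) (y (B j)))" unfolding A_def SB E_def ..
    also have "\<dots> = s_norm n (y (B j))" using Emul_sdnorm[of n "2 * n" "y (B j)"] by simp
    also have "\<dots> \<le> s_norm (2 * n) (y (B j))" by (rule snorm_mono[OF s_space_fin[OF ybs]]) simp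
    also have "\<dots> = s_norm 0 (Emul (2 * n) (y (B j)))" unfolding Emul_snorm by simp
    also have "\<dots> \<le> sqrt ?P * s_norm 0 (B j)" by (rule R2[OF x y a s_space_fin[OF Bs]])
    also have "\<dots> \<le> sqrt ?P * (L ^ j * K0)" using Bb[of j] P0 by (intro mult_left_mono) auto
    finally show ?thesis by (simp add: mult_ac)
  qed
  have Qk: "A 1 * A k \<le> A (Suc k) * A 0" for k
  proof (induction k)
    case 0 then show ?case by (simp add: mult.commute)
  next
    case (Suc k)
    have "A 1 * A (Suc k) * A (Suc k) = A 1 * (A (Suc k))\<^sup>2" by (simp add: power2_eq_square mult_ac)
    also have "\<dots> \<le> A 1 * (A k * A (Suc (Suc k)))" using logc[of k] A0 by (intro mult_left_mono) auto
    also have "\<dots> = (A 1 * A k) * A (Suc (Suc k))" by (simp add: mult_ac)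
    also have "\<dots> \<le> (A (Suc k) * A 0) * A (Suc (Suc k))" using Suc A0 by (intro mult_right_mono) auto
    finally have h: "A (Suc k) * (A 1 * A (Suc k)) \<le> A (Suc k) * (A (Suc (Suc k)) * A 0)" by (simp add: mult_ac)
    show ?case
    proof (cases "A (Suc k) = 0")
      case True then show ?thesis using A0 by simp
    next
      case False
      then have "A (Suc k) > 0" using A0[of "Suc k"] by simp
      then show ?thesis using h by simp
    qed
  qed
  have A0le: "A 0 \<le> 1" unfolding A_def using xin by simp
  have pw: "A 1 ^ Suc j * A 0 \<le> A (Suc j)" for j
  proof (induction j)
    case 0 then show ?case using A0le A0[of 1] by (simp add: mult_left_le)
  next
    case (Suc j)
    have "A 1 ^ Suc (Suc j) * A 0 = A 1 * (A 1 ^ Suc j * A 0)" by (simp add: mult_ac)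
    also have "\<dots> \<le> A 1 * A (Suc j)" using Suc A0 by (intro mult_left_mono) auto
    also have "\<dots> \<le> A (Suc (Suc j)) * A 0" by (rule Qk)
    also have "\<dots> \<le> A (Suc (Suc j))" using A0le A0 by (simp add: mult_left_le)
    finally show ?case .
  qed
  have "A 1 * A 0 \<le> L"
  proof (rule final_real[where K = "sqrt ?P * K0"])
    show "0 \<le> A 0" "A 0 \<le> 1" "0 \<le> A 1" "0 \<le> L" using A0 A0le L0 by auto
    fix j show "A 1 ^ Suc j * A 0 \<le> sqrt ?P * K0 * L ^ j" using pw[of j] Ab[of j] by simp
  qed
  with dstep show ?thesis unfolding L_def by simp
qed

lemma part_iii:
  assumes x: "x \<in> SS" and y: "y \<in> SS" and a: "adj y x"
  shows "(op_norm n x)\<^sup>2 \<le> sqrt (op_norm (2 * n) (smult y x)) * sqrt (op_norm (2 * n) (smult x y))"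
proof -
  let ?L = "sqrt (op_norm (2 * n) (smult y x)) * sqrt (op_norm (2 * n) (smult x y))"
  have "op_norm n x \<le> sqrt ?L"
    by (rule opn_least, rule real_le_rsqrt, rule main_iii[OF x y a])
  moreover have "op_norm n x \<ge> 0" by (rule opn_nonneg[OF good_SS[OF x]])
  moreover have "?L \<ge> 0" using opn_nonneg[OF good_smult[OF x y]] opn_nonneg[OF good_smult[OF y x]] by simp
  ultimately show ?thesis using power_mono[of "op_norm n x" "sqrt ?L" 2] by simp
qed

section \<open>Part (i)\<close>

lemma part_i:
  assumes pos: "positive x"
  shows "op_norm n x = Sup {Re (pair (x \<xi>) \<xi>) | \<xi>. \<xi> \<in> sd_space \<and> sd_fin n \<xi> \<and> sd_norm n \<xi> \<le> 1}"
proof -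
  have x: "x \<in> SS" using pos unfolding positive_def by blast
  obtain y z where y: "y \<in> SS" and za: "is_adjoint z y" and xz: "\<And>\<xi>. \<xi> \<in> sd_space \<Longrightarrow> x \<xi> = z (y \<xi>)"
    using pos unfolding positive_def smult_def by blast
  have z: "z \<in> SS" and a: "adj z y" using za unfolding is_adjoint_adj by auto
  define Qf where "Qf = (\<lambda>\<xi>. Re (pair (x \<xi>) \<xi>))"
  have seteq: "{Re (pair (x \<xi>) \<xi>) | \<xi>. \<xi> \<in> sd_space \<and> sd_fin n \<xi> \<and> sd_norm n \<xi> \<le> 1} = Qf ` Bl n"
    unfolding Qf_def Bl_def by (simp add: setcompr_eq_image)
  have Qeq: "Qf \<xi> = (s_norm 0 (y \<xi>))\<^sup>2" if "\<xi> \<in> sd_space" for \<xi>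
  proof -
    have ys: "y \<xi> \<in> s_space" by (rule SS_space[OF y that])
    have "pair (x \<xi>) \<xi> = pair (z (y \<xi>)) \<xi>" using xz[OF that] by simp
    also have "\<dots> = pair (y \<xi>) (y \<xi>)" by (rule adjD[OF a s_space_sd[OF ys] that])
    also have "\<dots> = complex_of_real ((s_norm 0 (y \<xi>))\<^sup>2)" by (rule P_self[OF s_space_fin[OF ys]])
    finally show ?thesis unfolding Qf_def by simp
  qed
  define N where "N = op_norm n x"
  have N0: "N \<ge> 0" unfolding N_def by (rule opn_nonneg[OF good_SS[OF x]])
  have QleN: "Qf \<xi> \<le> N" if "\<xi> \<in> Bl n" for \<xi>
  proof -
    have h: "\<xi> \<in> sd_space" "sd_fin n \<xi>" "sd_norm n \<xi> \<le> 1" using that unfolding Bl_def by auto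
    have xs: "x \<xi> \<in> s_space" by (rule SS_space[OF x h(1)])
    have d0: "sd_norm n \<xi> \<ge> 0" by (rule sdnorm_nonneg[OF h(2)])
    have "Qf \<xi> \<le> cmod (pair (x \<xi>) \<xi>)" unfolding Qf_def by (rule complex_Re_le_cmod)
    also have "\<dots> \<le> s_norm n (x \<xi>) * sd_norm n \<xi>" by (rule P1(2)[OF s_space_fin[OF xs] h(2)])
    also have "\<dots> \<le> (N * sd_norm n \<xi>) * sd_norm n \<xi>"
      using opn_bound[OF good_SS[OF x] h(1,2)] d0 unfolding N_def by (intro mult_right_mono) auto
    also have "\<dots> \<le> N * 1 * 1" using h(3) d0 N0 by (intro mult_mono) auto
    finally show ?thesis by simp
  qed
  have bddQ: "bdd_above (Qf ` Bl n)" using QleN by (intro bdd_aboveI2) auto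
  define S1 where "S1 = Sup (Qf ` Bl n)"
  have S1N: "S1 \<le> N" unfolding S1_def
  proof (rule cSup_least)
    show "Qf ` Bl n \<noteq> {}" using Bl_zero by blast
    fix v assume "v \<in> Qf ` Bl n" then show "v \<le> N" using QleN by blast
  qed
  have QS1: "Qf \<xi> \<le> S1" if "\<xi> \<in> Bl n" for \<xi>
    unfolding S1_def by (rule cSup_upper[OF imageI[OF that] bddQ])
  have S10: "S1 \<ge> 0"
  proof -
    have "Qf (\<lambda>k. 0) = (s_norm 0 (y (\<lambda>k. 0)))\<^sup>2" by (rule Qeq[OF zero_fins(3)])
    then have "Qf (\<lambda>k. 0) \<ge> 0" by simp
    then show ?thesis using QS1[OF Bl_zero] by simp
  qed
  have scal: "(s_norm 0 (y \<eta>))\<^sup>2 \<le> S1 * (sd_norm n \<eta>)\<^sup>2" if hs: "\<eta> \<in> sd_space" "sd_fin n \<eta>" for \<eta>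
  proof (cases "sd_norm n \<eta> = 0")
    case True
    then have "\<eta> = (\<lambda>k. 0)" using sdnorm_zero hs by blast
    then show ?thesis using good_zero[OF good_SS[OF y]] zero_fins by simp
  next
    case False
    define d where "d = sd_norm n \<eta>"
    have dp: "d > 0" using False sdnorm_nonneg[OF hs(2)] by (simp add: d_def)
    define \<eta>' where "\<eta>' = (\<lambda>k. complex_of_real (1 / d) * \<eta> k)"
    have "sd_norm n \<eta>' = cmod (complex_of_real (1 / d)) * d"
      unfolding \<eta>'_def d_def by (rule scale_fins(2)[OF hs(2)])
    also have "\<dots> = 1" using dp by (simp add: norm_divide)
    moreover have es: "\<eta>' \<in> sd_space" unfolding \<eta>'_def by (rule scale_space[OF hs(1)])
    moreover have "sd_fin n \<eta>'" unfolding \<eta>'_def by (rule scale_fins(1)[OF hs(2)])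
    ultimately have eB: "\<eta>' \<in> Bl n" unfolding Bl_def by simp
    have ys: "y \<eta> \<in> s_space" by (rule SS_space[OF y hs(1)])
    have B: "y \<eta>' = (\<lambda>k. complex_of_real (1 / d) * y \<eta> k)"
      unfolding \<eta>'_def by (rule SS_hom[OF y hs(1)])
    have C: "s_norm 0 (\<lambda>k. complex_of_real (1 / d) * y \<eta> k) = cmod (complex_of_real (1 / d)) * s_norm 0 (y \<eta>)"
      by (rule scale_sfins(2)[OF s_space_fin[OF ys]])
    have D: "cmod (complex_of_real (1 / d)) = 1 / d" using dp by (simp add: norm_divide)
    have "(1 / d * s_norm 0 (y \<eta>))\<^sup>2 = Qf \<eta>'" unfolding Qeq[OF es] B C D ..
    also have "\<dots> \<le> S1" by (rule QS1[OF eB])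
    finally have "(s_norm 0 (y \<eta>))\<^sup>2 / d\<^sup>2 \<le> S1" by (simp add: power_divide)
    then have "(s_norm 0 (y \<eta>))\<^sup>2 \<le> S1 * d\<^sup>2" using dp by (simp add: pos_divide_le_eq)
    then show ?thesis unfolding d_def .
  qed
  have main: "s_norm n (x \<xi>) \<le> S1" if "\<xi> \<in> Bl n" for \<xi>
  proof -
    have h: "\<xi> \<in> sd_space" "sd_fin n \<xi>" "sd_norm n \<xi> \<le> 1" using that unfolding Bl_def by auto
    define v where "v = x \<xi>"
    have vs: "v \<in> s_space" unfolding v_def by (rule SS_space[OF x h(1)])
    define \<eta> where "\<eta> = Emul (2 * n) v"
    have es: "\<eta> \<in> s_space" unfolding \<eta>_def by (rule Emul_space[OF vs])
    have en: "sd_norm n \<eta> = s_norm n v" unfolding \<eta>_def using Emul_sdnorm[of n "2 * n" v] by simp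
    define sn where "sn = s_norm n v"
    have sn0: "sn \<ge> 0" unfolding sn_def by (rule snorm_nonneg[OF s_space_fin[OF vs]])
    have yxs: "y \<xi> \<in> s_space" by (rule SS_space[OF y h(1)])
    have yes: "y \<eta> \<in> s_space" by (rule SS_space[OF y s_space_sd[OF es]])
    have "complex_of_real (sn\<^sup>2) = pair v \<eta>" unfolding sn_def \<eta>_def by (rule P_E[OF s_space_fin[OF vs], symmetric])
    also have "\<dots> = pair (z (y \<xi>)) \<eta>" unfolding v_def using xz[OF h(1)] by simp
    also have "\<dots> = pair (y \<xi>) (y \<eta>)" by (rule adjD[OF a s_space_sd[OF yxs] s_space_sd[OF es]])
    finally have e: "complex_of_real (sn\<^sup>2) = pair (y \<xi>) (y \<eta>)" .
    have b1: "s_norm 0 (y \<xi>) \<le> sqrt S1"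
    proof (rule real_le_rsqrt)
      have "(s_norm 0 (y \<xi>))\<^sup>2 \<le> S1 * (sd_norm n \<xi>)\<^sup>2" by (rule scal[OF h(1,2)])
      also have "\<dots> \<le> S1 * 1" using h(3) sdnorm_nonneg[OF h(2)] S10
        by (intro mult_left_mono) (auto simp: power_le_one)
      finally show "(s_norm 0 (y \<xi>))\<^sup>2 \<le> S1" by simp
    qed
    have b2: "s_norm 0 (y \<eta>) \<le> sqrt S1 * sn"
    proof -
      have "(s_norm 0 (y \<eta>))\<^sup>2 \<le> S1 * sn\<^sup>2" using scal[OF s_space_sd[OF es] s_to_sd[OF es]] en sn_def by simp
      then have "s_norm 0 (y \<eta>) \<le> sqrt (S1 * sn\<^sup>2)" by (rule real_le_rsqrt)
      also have "\<dots> = sqrt S1 * sn" using sn0 by (simp add: real_sqrt_mult)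
      finally show ?thesis .
    qed
    have "sn\<^sup>2 = cmod (pair (y \<xi>) (y \<eta>))" unfolding e[symmetric] norm_of_real by simp
    also have "\<dots> \<le> s_norm 0 (y \<xi>) * sd_norm 0 (y \<eta>)"
      by (rule P1(2)[OF s_space_fin[OF yxs] s_to_sd[OF yes]])
    also have "sd_norm 0 (y \<eta>) = s_norm 0 (y \<eta>)" by (rule snorm0_sdnorm0)
    also have "s_norm 0 (y \<xi>) * s_norm 0 (y \<eta>) \<le> sqrt S1 * (sqrt S1 * sn)"
      using b1 b2 S10 snorm_nonneg[OF s_space_fin[OF yes]] by (intro mult_mono) auto
    also have "\<dots> = S1 * sn" using S10 by (simp add: mult.assoc[symmetric])
    finally have hh: "sn * sn \<le> sn * S1" by (simp add: power2_eq_square mult.commute)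
    have "sn \<le> S1"
    proof (cases "sn = 0")
      case True then show ?thesis using S10 by simp
    next
      case False then have "sn > 0" using sn0 by simp
      then show ?thesis using hh by simp
    qed
    then show ?thesis unfolding sn_def v_def .
  qed
  have "N \<le> S1" unfolding N_def by (rule opn_least[OF main])
  with S1N have "N = S1" by simp
  then show ?thesis unfolding seteq N_def S1_def .
qed

section \<open>The example\<close>

definition x0 :: "cseq \<Rightarrow> cseq" where
  "x0 \<xi> = (\<lambda>k. if k = 0 then \<xi> 0 else 0)"

lemma x0_fin: "s_fin m (x0 \<xi>)" "s_norm m (x0 \<xi>) = cmod (\<xi> 0)"
proof -
  have z: "\<And>k. k \<notin> {0} \<Longrightarrow> (cmod (x0 \<xi> k))\<^sup>2 * real (Suc k) ^ (2 * m) = 0" by (simp add: x0_def)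
  show "s_fin m (x0 \<xi>)" unfolding s_fin_def by (rule summable_finite[of "{0}"]) (use z in auto)
  have "(\<Sum>k. (cmod (x0 \<xi> k))\<^sup>2 * real (Suc k) ^ (2 * m)) = (cmod (\<xi> 0))\<^sup>2"
    by (subst suminf_finite[of "{0}"]) (use z in \<open>auto simp: x0_def of_nat_Suc\<close>)
  then show "s_norm m (x0 \<xi>) = cmod (\<xi> 0)" unfolding s_norm_def by simp
qed

lemma x0_space: "x0 \<xi> \<in> s_space"
  unfolding s_space_def using x0_fin by simp

lemma first_le_sdnorm: assumes "sd_fin k \<xi>" shows "cmod (\<xi> 0) \<le> sd_norm k \<xi>"
proof -
  have "(\<Sum>i\<in>{0}. (cmod (\<xi> i))\<^sup>2 / real (Suc i) ^ (2 * k)) \<le> (\<Sum>i. (cmod (\<xi> i))\<^sup>2 / real (Suc i) ^ (2 * k))"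
    using assms unfolding sd_fin_def by (intro sum_le_suminf) auto
  then have "(cmod (\<xi> 0))\<^sup>2 \<le> (\<Sum>i. (cmod (\<xi> i))\<^sup>2 / real (Suc i) ^ (2 * k))" by (simp add: of_nat_Suc)
  then show ?thesis unfolding sd_norm_def by (rule real_le_rsqrt)
qed

lemma x0_SS: "x0 \<in> SS"
  unfolding SS_def
proof (intro CollectI conjI ballI allI)
  fix \<xi> :: cseq show "x0 \<xi> \<in> s_space" by (rule x0_space)
next
  fix \<xi> \<eta> :: cseq and a b :: complex
  show "x0 (\<lambda>k. a * \<xi> k + b * \<eta> k) = (\<lambda>k. a * x0 \<xi> k + b * x0 \<eta> k)"
    unfolding x0_def by (rule ext) simp
next
  fix k m :: nat
  show "\<exists>C. \<forall>\<xi>. sd_fin k \<xi> \<longrightarrow> s_norm m (x0 \<xi>) \<le> C * sd_norm k \<xi>"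
    by (rule exI[of _ 1]) (simp add: x0_fin first_le_sdnorm)
qed

lemma x0_pair: "pair (x0 \<xi>) \<eta> = \<xi> 0 * cnj (\<eta> 0)" "pair \<xi> (x0 \<eta>) = \<xi> 0 * cnj (\<eta> 0)"
proof -
  have z1: "\<And>k. k \<notin> {0} \<Longrightarrow> x0 \<xi> k * cnj (\<eta> k) = 0" by (simp add: x0_def)
  have z2: "\<And>k. k \<notin> {0} \<Longrightarrow> \<xi> k * cnj (x0 \<eta> k) = 0" by (simp add: x0_def)
  show "pair (x0 \<xi>) \<eta> = \<xi> 0 * cnj (\<eta> 0)" unfolding pair_def
    by (subst suminf_finite[of "{0}"]) (use z1 in \<open>auto simp: x0_def of_nat_Suc\<close>)
  show "pair \<xi> (x0 \<eta>) = \<xi> 0 * cnj (\<eta> 0)" unfolding pair_def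
    by (subst suminf_finite[of "{0}"]) (use z2 in \<open>auto simp: x0_def of_nat_Suc\<close>)
qed

lemma x0_adj: "is_adjoint x0 x0"
  unfolding is_adjoint_def using x0_SS x0_pair by simp

lemma x0_idem: "smult x0 x0 = x0"
  unfolding smult_def x0_def by (rule ext) simp

definition e0 :: cseq where "e0 = (\<lambda>k. if k = 0 then 1 else 0)"

lemma e0_props: "sd_fin m e0" "sd_norm m e0 = 1" "e0 \<in> sd_space"
proof -
  have z: "\<And>k. k \<notin> {0} \<Longrightarrow> (cmod (e0 k))\<^sup>2 / real (Suc k) ^ (2 * m) = 0" by (simp add: e0_def)
  show f: "sd_fin m e0" unfolding sd_fin_def by (rule summable_finite[of "{0}"]) (use z in auto)
  have "(\<Sum>k. (cmod (e0 k))\<^sup>2 / real (Suc k) ^ (2 * m)) = 1"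
    by (subst suminf_finite[of "{0}"]) (use z in \<open>auto simp: e0_def of_nat_Suc\<close>)
  then show "sd_norm m e0 = 1" unfolding sd_norm_def by simp
  show "e0 \<in> sd_space" by (rule sdfin_space[OF f])
qed

lemma x0_norm: "op_norm m x0 = 1"
proof (rule antisym)
  show "op_norm m x0 \<le> 1"
  proof (rule opn_least)
    fix \<xi> assume "\<xi> \<in> Bl m"
    then have "sd_fin m \<xi>" "sd_norm m \<xi> \<le> 1" unfolding Bl_def by auto
    then show "s_norm m (x0 \<xi>) \<le> 1" using first_le_sdnorm x0_fin(2) by (metis order_trans)
  qed
  have "e0 \<in> Bl m" unfolding Bl_def using e0_props by simp
  then have "s_norm m (x0 e0) \<le> op_norm m x0" by (rule opn_upper[OF good_SS[OF x0_SS]])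
  then show "1 \<le> op_norm m x0" by (simp add: x0_fin e0_def)
qed

lemma x0_nonzero: "nonzero_op x0"
  unfolding nonzero_op_def
proof (rule bexI[OF _ e0_props(3)])
  show "x0 e0 \<noteq> (\<lambda>k. 0)"
  proof
    assume "x0 e0 = (\<lambda>k. 0)"
    then have "x0 e0 0 = 0" by simp
    then show False by (simp add: x0_def e0_def)
  qed
qed

theorem proposition2p1:
  fixes n :: nat
  assumes "n \<ge> 1"
  shows
    "(\<forall>x. positive x \<longrightarrow>
        op_norm n x = Sup {Re (pair (x \<xi>) \<xi>) | \<xi>. \<xi> \<in> sd_space \<and> sd_fin n \<xi> \<and> sd_norm n \<xi> \<le> 1})
   \<and> (\<forall>x. self_adjoint x \<longrightarrow> (op_norm n x)\<^sup>2 \<le> op_norm (2 * n) (smult x x))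
   \<and> (\<forall>x y. x \<in> SS \<and> is_adjoint y x \<longrightarrow>
        (op_norm n x)\<^sup>2 \<le> sqrt (op_norm (2 * n) (smult y x)) * sqrt (op_norm (2 * n) (smult x y)))
   \<and> (\<exists>x. self_adjoint x \<and> nonzero_op x \<and> (op_norm n x)\<^sup>2 = op_norm (2 * n) (smult x x))
   \<and> (\<exists>x y. x \<in> SS \<and> is_adjoint y x \<and> nonzero_op x \<and>
        (op_norm n x)\<^sup>2 = sqrt (op_norm (2 * n) (smult y x)) * sqrt (op_norm (2 * n) (smult x y)))"
proof (intro conjI allI impI)
  fix x assume "positive x"
  then show "op_norm n x = Sup {Re (pair (x \<xi>) \<xi>) | \<xi>. \<xi> \<in> sd_space \<and> sd_fin n \<xi> \<and> sd_norm n \<xi> \<le> 1}"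
    by (rule part_i)
next
  fix x assume sa: "self_adjoint x"
  then have x: "x \<in> SS" and a: "adj x x" unfolding self_adjoint_def is_adjoint_adj by auto
  have "(op_norm n x)\<^sup>2 \<le> sqrt (op_norm (2 * n) (smult x x)) * sqrt (op_norm (2 * n) (smult x x))"
    by (rule part_iii[OF x x a])
  also have "\<dots> = op_norm (2 * n) (smult x x)" using opn_nonneg[OF good_smult[OF x x]] by simp
  finally show "(op_norm n x)\<^sup>2 \<le> op_norm (2 * n) (smult x x)" .
next
  fix x y assume h: "x \<in> SS \<and> is_adjoint y x"
  then have x: "x \<in> SS" and y: "y \<in> SS" and a: "adj y x" unfolding is_adjoint_adj by auto
  show "(op_norm n x)\<^sup>2 \<le> sqrt (op_norm (2 * n) (smult y x)) * sqrt (op_norm (2 * n) (smult x y))"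
    by (rule part_iii[OF x y a])
next
  show "\<exists>x. self_adjoint x \<and> nonzero_op x \<and> (op_norm n x)\<^sup>2 = op_norm (2 * n) (smult x x)"
    by (rule exI[of _ x0]) (simp add: self_adjoint_def x0_SS x0_adj x0_nonzero x0_idem x0_norm)
next
  show "\<exists>x y. x \<in> SS \<and> is_adjoint y x \<and> nonzero_op x \<and>
        (op_norm n x)\<^sup>2 = sqrt (op_norm (2 * n) (smult y x)) * sqrt (op_norm (2 * n) (smult x y))"
    by (rule exI[of _ x0], rule exI[of _ x0]) (simp add: x0_SS x0_adj x0_nonzero x0_idem x0_norm)
qed

end
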